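(* For any fixed $k\ge 3$, as $t\to\infty$, $$\Pr\big(|Z_k(t) - \mathbb{E}[Z_k(t)]| \geq \sqrt{t\log t}\big) = o(1),$$ where $Z_k(t)$ is the number of vertices of degree $k$ in a Random Apollonian Network after $t$ steps.
   Context: A Random Apollonian Network (RAN) is generated as follows: start (at time $t=0$) with a single triangular face. At each step $t=1,2,\dots$, pick one of the current (bounded) triangular faces uniformly at random, insert a new vertex inside it, and connect it to the three vertices on the boundary of that face, subdividing the face into three new triangular faces. $Z_k(t)$ denotes the number of vertices of degree exactly $k$ after $t$ steps. *)

theory Defs
  imports "HOL-Probability.Probability"
begin

text \<open>A state of a Random Apollonian Network: number of vertices n (vertices are 0..<n),
  the set of bounded triangular faces (each a 3-element vertex set), and the edge set
  (each edge a 2-element vertex set).\<close>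

record ran_state =
  nverts :: nat
  faces :: "nat set set"
  edges :: "nat set set"

definition ran_init :: ran_state where
  "ran_init = \<lparr> nverts = 3, faces = {{0,1,2}}, edges = {{0,1},{1,2},{0,2}} \<rparr>"

definition ran_insert :: "ran_state \<Rightarrow> nat set \<Rightarrow> ran_state" where
  "ran_insert s f =
     \<lparr> nverts = Suc (nverts s),
       faces = (faces s - {f}) \<union> {insert (nverts s) (f - {x}) | x. x \<in> f},
       edges = edges s \<union> {{nverts s, x} | x. x \<in> f} \<rparr>"

definition ran_step :: "ran_state \<Rightarrow> ran_state pmf" where
  "ran_step s = map_pmf (ran_insert s) (pmf_of_set (faces s))"

primrec RAN :: "nat \<Rightarrow> ran_state pmf" where
  "RAN 0 = return_pmf ran_init"
| "RAN (Suc t) = bind_pmf (RAN t) ran_step"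

definition degree :: "ran_state \<Rightarrow> nat \<Rightarrow> nat" where
  "degree s v = card {u. {u, v} \<in> edges s \<and> u \<noteq> v}"

definition Z :: "nat \<Rightarrow> ran_state \<Rightarrow> nat" where
  "Z k s = card {v. v < nverts s \<and> degree s v = k}"

end

theory Submission
  imports Defs
begin


definition ran_inv :: "ran_state \<Rightarrow> bool" where
 "ran_inv s \<longleftrightarrow> finite (faces s) \<and> faces s \<noteq> {} \<and>
    (\<forall>g\<in>faces s. card g = 3 \<and> g \<subseteq> {..<nverts s}) \<and> (\<forall>e\<in>edges s. e \<subseteq> {..<nverts s})"

definition inc :: "ran_state \<Rightarrow> nat \<Rightarrow> nat" where
  "inc s v = card {g\<in>faces s. v \<in> g}"

lemma inv_init: "ran_inv ran_init"
  by (auto simp: ran_inv_def ran_init_def)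

lemma new_faces_eq: "{insert n (f - {x}) | x. x \<in> f} = (\<lambda>x. insert n (f - {x})) ` f"
  by auto

lemma inj_new: assumes "n \<notin> f" shows "inj_on (\<lambda>x. insert n (f - {x})) f"
proof
  fix x y assume xy: "x \<in> f" "y \<in> f" "insert n (f - {x}) = insert n (f - {y})"
  then have "f - {x} = f - {y}" using assms
    by (metis Diff_iff insert_Diff_single insert_absorb insert_ident)
  then show "x = y" using xy by blast
qed

lemma inv_insert:
  assumes "ran_inv s" "f \<in> faces s"
  shows "ran_inv (ran_insert s f)"
proof -
  have f3: "card f = 3" and fsub: "f \<subseteq> {..<nverts s}" using assms by (auto simp: ran_inv_def)
  have fin: "finite f" using f3 card.infinite by fastforce
  have nf: "nverts s \<notin> f" using fsub by auto
  have c: "card (insert (nverts s) (f - {x})) = 3" if "x \<in> f" for x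
    using that f3 fin nf by (simp add: card_insert_if)
  have F: "\<forall>g\<in>faces (ran_insert s f). card g = 3 \<and> g \<subseteq> {..<nverts (ran_insert s f)}"
  proof
    fix g assume g: "g \<in> faces (ran_insert s f)"
    show "card g = 3 \<and> g \<subseteq> {..<nverts (ran_insert s f)}"
    proof (cases "g \<in> faces s")
      case True
      then show ?thesis using assms(1) g unfolding ran_inv_def ran_insert_def by force
    next
      case False
      then obtain x where x: "x \<in> f" "g = insert (nverts s) (f - {x})"
        using g unfolding ran_insert_def by auto
      then show ?thesis using c fsub unfolding ran_insert_def by auto
    qed
  qed
  have E: "\<forall>e\<in>edges (ran_insert s f). e \<subseteq> {..<nverts (ran_insert s f)}"
  proof
    fix e assume e: "e \<in> edges (ran_insert s f)"
    show "e \<subseteq> {..<nverts (ran_insert s f)}"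
    proof (cases "e \<in> edges s")
      case True
      then show ?thesis using assms(1) unfolding ran_inv_def ran_insert_def by force
    next
      case False
      then show ?thesis using e fsub unfolding ran_insert_def by auto
    qed
  qed
  have "finite (faces (ran_insert s f))" "faces (ran_insert s f) \<noteq> {}"
    using assms fin unfolding ran_inv_def ran_insert_def new_faces_eq by auto
  then show ?thesis using F E unfolding ran_inv_def by blast
qed

lemma degree_insert_old:
  assumes "ran_inv s" "f \<in> faces s" "v < nverts s"
  shows "degree (ran_insert s f) v = degree s v + (if v \<in> f then 1 else 0)"
proof -
  let ?n = "nverts s"
  let ?S = "{u. {u, v} \<in> edges s \<and> u \<noteq> v}"
  have E: "\<forall>e\<in>edges s. e \<subseteq> {..<?n}" using assms(1) by (simp add: ran_inv_def)
  have Ssub: "?S \<subseteq> {..<?n}"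
  proof
    fix u assume "u \<in> ?S"
    then have "{u, v} \<in> edges s" by simp
    then have "{u, v} \<subseteq> {..<?n}" by (rule bspec[OF E])
    then show "u \<in> {..<?n}" by simp
  qed
  have finS: "finite ?S" using Ssub finite_subset by blast
  have nS: "?n \<notin> ?S"
  proof
    assume "?n \<in> ?S"
    then have "?n \<in> {..<?n}" by (rule subsetD[OF Ssub])
    then show False by simp
  qed
  define N where "N = {{?n, x} | x. x \<in> f}"
  have ed: "edges (ran_insert s f) = edges s \<union> N" by (simp add: ran_insert_def N_def)
  have key: "({u, v} \<in> N \<and> u \<noteq> v) \<longleftrightarrow> (v \<in> f \<and> u = ?n)" for u
  proof
    assume h: "{u, v} \<in> N \<and> u \<noteq> v"
    then obtain x where x: "x \<in> f" "{u, v} = {?n, x}" unfolding N_def by blast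
    then have "(u = ?n \<and> v = x) \<or> (u = x \<and> v = ?n)" using doubleton_eq_iff[of u v ?n x] by blast
    then show "v \<in> f \<and> u = ?n" using x(1) assms(3) by auto
  next
    assume h: "v \<in> f \<and> u = ?n"
    then have "{u, v} \<in> N" unfolding N_def by blast
    then show "{u, v} \<in> N \<and> u \<noteq> v" using h assms(3) by simp
  qed
  have eq: "{u. {u, v} \<in> edges (ran_insert s f) \<and> u \<noteq> v} = ?S \<union> (if v \<in> f then {?n} else {})"
  proof (rule set_eqI)
    fix u
    show "u \<in> {u. {u, v} \<in> edges (ran_insert s f) \<and> u \<noteq> v} \<longleftrightarrow> u \<in> ?S \<union> (if v \<in> f then {?n} else {})"
      unfolding ed using key[of u] by (cases "v \<in> f") auto
  qed
  show ?thesis unfolding degree_def eq using finS nS by auto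
qed

lemma degree_insert_new:
  assumes "ran_inv s" "f \<in> faces s"
  shows "degree (ran_insert s f) (nverts s) = 3"
proof -
  have f3: "card f = 3" and fsub: "f \<subseteq> {..<nverts s}" using assms by (auto simp: ran_inv_def)
  have "{u. {u, nverts s} \<in> edges (ran_insert s f) \<and> u \<noteq> nverts s} = f"
    using assms(1) fsub unfolding ran_insert_def ran_inv_def by (auto simp: doubleton_eq_iff)
  then show ?thesis using f3 by (simp add: degree_def)
qed

lemma faces_insert_split:
  assumes "ran_inv s" "f \<in> faces s"
  shows "faces (ran_insert s f) = (faces s - {f}) \<union> (\<lambda>x. insert (nverts s) (f - {x})) ` f"
    and "(faces s - {f}) \<inter> (\<lambda>x. insert (nverts s) (f - {x})) ` f = {}"
  using assms unfolding ran_insert_def new_faces_eq ran_inv_def by auto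

lemma card_faces_insert:
  assumes "ran_inv s" "f \<in> faces s"
  shows "card (faces (ran_insert s f)) = card (faces s) + 2"
proof -
  have f3: "card f = 3" and fsub: "f \<subseteq> {..<nverts s}" and fin: "finite (faces s)"
    using assms by (auto simp: ran_inv_def)
  have finf: "finite f" using f3 card.infinite by fastforce
  have nf: "nverts s \<notin> f" using fsub by auto
  have ci: "card ((\<lambda>x. insert (nverts s) (f - {x})) ` f) = 3"
    using card_image[OF inj_new[OF nf]] f3 by simp
  have cf: "card (faces s - {f}) = card (faces s) - 1" using assms(2) fin by simp
  have "card (faces s) > 0" using assms(2) fin card_gt_0_iff by blast
  then show ?thesis
    unfolding faces_insert_split(1)[OF assms]
    using card_Un_disjoint[OF _ _ faces_insert_split(2)[OF assms]] fin finf ci cf by simp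
qed

lemma inc_insert_old:
  assumes "ran_inv s" "f \<in> faces s" "v < nverts s"
  shows "inc (ran_insert s f) v = inc s v + (if v \<in> f then 1 else 0)"
proof -
  let ?N = "(\<lambda>x. insert (nverts s) (f - {x})) ` f"
  have f3: "card f = 3" and fsub: "f \<subseteq> {..<nverts s}" and fin: "finite (faces s)"
    using assms by (auto simp: ran_inv_def)
  have finf: "finite f" using f3 card.infinite by fastforce
  have nf: "nverts s \<notin> f" using fsub by auto
  have eq: "{g\<in>faces (ran_insert s f). v \<in> g} =
     ({g\<in>faces s. v \<in> g} - {f}) \<union> (\<lambda>x. insert (nverts s) (f - {x})) ` (if v \<in> f then f - {v} else {})"
    unfolding faces_insert_split(1)[OF assms(1,2)] using assms(3) by auto
  have disj: "({g\<in>faces s. v \<in> g} - {f}) \<inter> (\<lambda>x. insert (nverts s) (f - {x})) ` (if v \<in> f then f - {v} else {}) = {}"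
    using assms(1) unfolding ran_inv_def by auto
  have ci: "card ((\<lambda>x. insert (nverts s) (f - {x})) ` (if v \<in> f then f - {v} else {})) = (if v \<in> f then 2 else 0)"
  proof (cases "v \<in> f")
    case True
    have ij: "inj_on (\<lambda>x. insert (nverts s) (f - {x})) (f - {v})"
      using inj_new[OF nf] by (rule inj_on_subset) auto
    show ?thesis using True card_image[OF ij] f3 finf by simp
  qed simp
  have fin2: "finite {g\<in>faces s. v \<in> g}" using fin by simp
  show ?thesis
  proof (cases "v \<in> f")
    case True
    have "card ({g\<in>faces s. v \<in> g} - {f}) = inc s v - 1" using True assms(2) fin2 by (simp add: inc_def)
    moreover have "inc s v \<ge> 1" unfolding inc_def using True assms(2) fin2
      by (metis (mono_tags, lifting) One_nat_def Suc_leI card_gt_0_iff empty_iff mem_Collect_eq)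
    moreover have "finite ((\<lambda>x. insert (nverts s) (f - {x})) ` (f - {v}))" using finf by simp
    ultimately show ?thesis unfolding inc_def[of "ran_insert s f"] eq
      using card_Un_disjoint[OF _ _ disj] fin2 ci True by (simp add: inc_def)
  next
    case False
    then have "{g\<in>faces s. v \<in> g} - {f} = {g\<in>faces s. v \<in> g}" by auto
    then show ?thesis unfolding inc_def[of "ran_insert s f"] eq
      using False by (simp add: inc_def)
  qed
qed

lemma inc_insert_new:
  assumes "ran_inv s" "f \<in> faces s"
  shows "inc (ran_insert s f) (nverts s) = 3"
proof -
  have f3: "card f = 3" and fsub: "f \<subseteq> {..<nverts s}"
    using assms by (auto simp: ran_inv_def)
  have nf: "nverts s \<notin> f" using fsub by auto
  have "{g\<in>faces (ran_insert s f). nverts s \<in> g} = (\<lambda>x. insert (nverts s) (f - {x})) ` f"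
    unfolding faces_insert_split(1)[OF assms] using assms(1) unfolding ran_inv_def by auto
  then show ?thesis unfolding inc_def using card_image[OF inj_new[OF nf]] f3 by simp
qed

lemma nverts_insert: "nverts (ran_insert s f) = Suc (nverts s)"
  by (simp add: ran_insert_def)



fun phi :: "nat \<Rightarrow> nat \<Rightarrow> nat \<Rightarrow> nat \<Rightarrow> nat \<Rightarrow> real" where
  "phi k 0 d a F = (if d = k then 1 else 0)"
| "phi k (Suc m) d a F = (real a / real F) * phi k m (d+1) (a+1) (F+2)
      + (1 - real a / real F) * phi k m d a (F+2)"

fun psi :: "nat \<Rightarrow> nat \<Rightarrow> nat \<Rightarrow> real" where
  "psi k 0 F = 0"
| "psi k (Suc m) F = phi k m 3 3 (F+2) + psi k m (F+2)"

definition H :: "nat \<Rightarrow> nat \<Rightarrow> ran_state \<Rightarrow> real" where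
  "H k m s = (\<Sum>v<nverts s. phi k m (degree s v) (inc s v) (card (faces s))) + psi k m (card (faces s))"

lemma phi_bounds: "a \<le> F \<Longrightarrow> 0 \<le> phi k m d a F \<and> phi k m d a F \<le> 1"
proof (induction m arbitrary: d a F)
  case 0 then show ?case by simp
next
  case (Suc m)
  have h1: "0 \<le> phi k m (d+1) (a+1) (F+2) \<and> phi k m (d+1) (a+1) (F+2) \<le> 1" using Suc by simp
  have h2: "0 \<le> phi k m d a (F+2) \<and> phi k m d a (F+2) \<le> 1" using Suc by simp
  have t: "0 \<le> real a / real F \<and> real a / real F \<le> 1"
    using Suc.prems by (cases "F = 0") (auto simp: divide_le_eq_1)
  define t' where "t' = real a / real F"
  define x where "x = phi k m (d+1) (a+1) (F+2)"
  define y where "y = phi k m d a (F+2)"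
  have "0 \<le> t' * x + (1 - t') * y \<and> t' * x + (1 - t') * y \<le> 1"
  proof -
    have x: "0 \<le> x" "x \<le> 1" and y: "0 \<le> y" "y \<le> 1" and tt: "0 \<le> t'" "t' \<le> 1"
      using h1 h2 t unfolding x_def y_def t'_def by auto
    have "0 \<le> t' * x" "0 \<le> (1 - t') * y" using x y tt by simp_all
    moreover have "t' * x \<le> t'" using x tt by (simp add: mult_left_le)
    moreover have "(1 - t') * y \<le> 1 - t'" using y tt by (simp add: mult_left_le)
    ultimately show ?thesis by linarith
  qed
  then show ?case by (simp add: t'_def x_def y_def)
qed

lemma H0: "H k 0 s = real (Z k s)"
proof -
  have "H k 0 s = (\<Sum>v\<in>{..<nverts s}. if degree s v = k then 1 else 0)" by (simp add: H_def)
  also have "\<dots> = (\<Sum>v\<in>{v\<in>{..<nverts s}. degree s v = k}. 1)"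
    by (rule sum.inter_filter[symmetric]) simp
  also have "{v\<in>{..<nverts s}. degree s v = k} = {v. v < nverts s \<and> degree s v = k}" by auto
  finally show ?thesis by (simp add: Z_def)
qed

lemma inc_le: "ran_inv s \<Longrightarrow> inc s v \<le> card (faces s)"
  unfolding inc_def ran_inv_def by (intro card_mono) auto

lemma phi_insert:
  assumes "ran_inv s" "f \<in> faces s" "v < nverts s"
  shows "phi k m (degree (ran_insert s f) v) (inc (ran_insert s f) v) (card (faces (ran_insert s f)))
     = (if v \<in> f then phi k m (degree s v + 1) (inc s v + 1) (card (faces s) + 2)
        else phi k m (degree s v) (inc s v) (card (faces s) + 2))"
  using degree_insert_old[OF assms] inc_insert_old[OF assms] card_faces_insert[OF assms(1,2)] by simp

lemma H_insert:
  assumes "ran_inv s" "f \<in> faces s"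
  shows "H k m (ran_insert s f) =
    (\<Sum>v<nverts s. (if v \<in> f then phi k m (degree s v + 1) (inc s v + 1) (card (faces s) + 2)
        else phi k m (degree s v) (inc s v) (card (faces s) + 2)))
    + phi k m 3 3 (card (faces s) + 2) + psi k m (card (faces s) + 2)"
  unfolding H_def nverts_insert sum.lessThan_Suc
  using phi_insert[OF assms] degree_insert_new[OF assms] inc_insert_new[OF assms] card_faces_insert[OF assms]
  by simp

lemma exp_step:
  assumes "ran_inv s"
  shows "measure_pmf.expectation (ran_step s) g = (\<Sum>f\<in>faces s. g (ran_insert s f)) / card (faces s)"
proof -
  have "finite (faces s)" "faces s \<noteq> {}" using assms by (auto simp: ran_inv_def)
  then show ?thesis unfolding ran_step_def by (simp add: integral_pmf_of_set)
qed

lemma sum_if_count: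
  assumes "finite A"
  shows "(\<Sum>f\<in>A. if v \<in> f then (x::real) else y) = real (card {f\<in>A. v \<in> f}) * x + (real (card A) - real (card {f\<in>A. v \<in> f})) * y"
proof -
  have "(\<Sum>f\<in>A. if v \<in> f then x else y) = real (card (A \<inter> {f. v \<in> f})) * x + real (card (A \<inter> - {f. v \<in> f})) * y"
    using assms by (simp add: sum.If_cases)
  moreover have "A \<inter> - {f. v \<in> f} = A - {f\<in>A. v \<in> f}" by auto
  moreover have "card (A - {f\<in>A. v \<in> f}) = card A - card {f\<in>A. v \<in> f}"
    using assms by (intro card_Diff_subset) auto
  moreover have "card {f\<in>A. v \<in> f} \<le> card A" using assms by (intro card_mono) auto
  moreover have "A \<inter> {f. v \<in> f} = {f\<in>A. v \<in> f}" by auto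
  ultimately show ?thesis by (simp add: of_nat_diff)
qed

lemma step_H:
  assumes "ran_inv s"
  shows "measure_pmf.expectation (ran_step s) (H k m) = H k (Suc m) s"
proof -
  let ?F = "card (faces s)"
  have fin: "finite (faces s)" and ne: "faces s \<noteq> {}" using assms by (auto simp: ran_inv_def)
  have Fp: "?F > 0" using fin ne card_gt_0_iff by blast
  have "(\<Sum>f\<in>faces s. H k m (ran_insert s f)) =
     (\<Sum>f\<in>faces s. (\<Sum>v<nverts s. (if v \<in> f then phi k m (degree s v + 1) (inc s v + 1) (?F + 2)
        else phi k m (degree s v) (inc s v) (?F + 2)))
    + (phi k m 3 3 (?F + 2) + psi k m (?F + 2)))"
    using H_insert[OF assms] by (intro sum.cong) auto
  also have "\<dots> = (\<Sum>v<nverts s. \<Sum>f\<in>faces s. (if v \<in> f then phi k m (degree s v + 1) (inc s v + 1) (?F + 2)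
        else phi k m (degree s v) (inc s v) (?F + 2)))
    + ?F * (phi k m 3 3 (?F + 2) + psi k m (?F + 2))"
    by (simp add: sum.distrib sum.swap[of _ "faces s"])
  also have "\<dots> = (\<Sum>v<nverts s. ?F * phi k (Suc m) (degree s v) (inc s v) ?F)
    + ?F * (phi k m 3 3 (?F + 2) + psi k m (?F + 2))"
    by (intro arg_cong2[where f="(+)"] sum.cong refl)
       (use Fp in \<open>simp add: sum_if_count[OF fin] inc_def[symmetric] field_simps\<close>)
  also have "\<dots> = ?F * H k (Suc m) s"
    by (simp only: H_def psi.simps sum_distrib_left[symmetric] distrib_left add.assoc)
  finally show ?thesis
    unfolding exp_step[OF assms] using Fp by simp
qed

lemma H_insert_close:
  assumes "ran_inv s" "f \<in> faces s"
  shows "\<bar>H k m (ran_insert s f) -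
    ((\<Sum>v<nverts s. phi k m (degree s v) (inc s v) (card (faces s) + 2))
    + phi k m 3 3 (card (faces s) + 2) + psi k m (card (faces s) + 2))\<bar> \<le> 3"
proof -
  let ?F = "card (faces s)"
  define \<delta> where "\<delta> v = phi k m (degree s v + 1) (inc s v + 1) (?F + 2) - phi k m (degree s v) (inc s v) (?F + 2)" for v
  have d1: "\<bar>\<delta> v\<bar> \<le> 1" for v
  proof -
    have "inc s v \<le> ?F" using inc_le[OF assms(1)] .
    then show ?thesis unfolding \<delta>_def using phi_bounds[of "inc s v + 1" "?F+2" k m "degree s v + 1"]
        phi_bounds[of "inc s v" "?F+2" k m "degree s v"] by auto
  qed
  have f3: "card f = 3" and fsub: "f \<subseteq> {..<nverts s}" using assms by (auto simp: ran_inv_def)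
  have "H k m (ran_insert s f) -
    ((\<Sum>v<nverts s. phi k m (degree s v) (inc s v) (?F + 2))
    + phi k m 3 3 (?F + 2) + psi k m (?F + 2)) = (\<Sum>v<nverts s. if v \<in> f then \<delta> v else 0)"
    unfolding H_insert[OF assms] \<delta>_def by (auto simp: sum_subtractf[symmetric] intro!: sum.cong)
  also have "\<dots> = (\<Sum>v\<in>f. \<delta> v)"
  proof -
    have "f \<inter> {..<nverts s} = f" "{..<nverts s} \<inter> f = f" using fsub by blast+
    then show ?thesis by (simp add: sum.If_cases)
  qed
  finally have eq: "H k m (ran_insert s f) -
    ((\<Sum>v<nverts s. phi k m (degree s v) (inc s v) (?F + 2))
    + phi k m 3 3 (?F + 2) + psi k m (?F + 2)) = (\<Sum>v\<in>f. \<delta> v)" .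
  have "\<bar>\<Sum>v\<in>f. \<delta> v\<bar> \<le> (\<Sum>v\<in>f. \<bar>\<delta> v\<bar>)" by (rule sum_abs)
  also have "\<dots> \<le> (\<Sum>v\<in>f. 1)" by (intro sum_mono d1)
  also have "\<dots> = 3" using f3 by simp
  finally show ?thesis unfolding eq .
qed



lemma set_step: "ran_inv s \<Longrightarrow> set_pmf (ran_step s) = ran_insert s ` faces s"
  unfolding ran_step_def ran_inv_def by simp

lemma RAN_props: "finite (set_pmf (RAN t)) \<and> (\<forall>s\<in>set_pmf (RAN t). ran_inv s)"
proof (induction t)
  case 0 then show ?case by (simp add: inv_init)
next
  case (Suc t)
  have eq: "set_pmf (RAN (Suc t)) = (\<Union>s\<in>set_pmf (RAN t). ran_insert s ` faces s)"
    using Suc set_step by (simp add: set_bind_pmf)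
  have "finite (faces s)" if "s \<in> set_pmf (RAN t)" for s using Suc that by (auto simp: ran_inv_def)
  then show ?case unfolding eq using Suc inv_insert by auto
qed

lemma exp_bind:
  fixes f :: "'b \<Rightarrow> real"
  assumes fp: "finite (set_pmf p)" and fq: "\<And>x. x \<in> set_pmf p \<Longrightarrow> finite (set_pmf (q x))"
  shows "measure_pmf.expectation (bind_pmf p q) f =
         measure_pmf.expectation p (\<lambda>x. measure_pmf.expectation (q x) f)"
proof -
  let ?Y = "\<Union>x\<in>set_pmf p. set_pmf (q x)"
  have finY: "finite ?Y" using assms by auto
  have "measure_pmf.expectation (bind_pmf p q) f = (\<Sum>y\<in>?Y. f y * pmf (bind_pmf p q) y)"
    by (rule integral_measure_pmf_real) (auto simp: finY set_bind_pmf)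
  also have "\<dots> = (\<Sum>y\<in>?Y. f y * (\<Sum>x\<in>set_pmf p. pmf (q x) y * pmf p x))"
  proof (intro sum.cong refl arg_cong2[where f="(*)"])
    fix y show "pmf (bind_pmf p q) y = (\<Sum>x\<in>set_pmf p. pmf (q x) y * pmf p x)"
      unfolding pmf_bind by (rule integral_measure_pmf_real) (auto simp: fp)
  qed
  also have "\<dots> = (\<Sum>y\<in>?Y. \<Sum>x\<in>set_pmf p. f y * pmf (q x) y * pmf p x)"
    by (simp add: sum_distrib_left mult.assoc)
  also have "\<dots> = (\<Sum>x\<in>set_pmf p. \<Sum>y\<in>?Y. f y * pmf (q x) y * pmf p x)"
    by (rule sum.swap)
  also have "\<dots> = (\<Sum>x\<in>set_pmf p. (\<Sum>y\<in>?Y. f y * pmf (q x) y) * pmf p x)"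
    by (simp add: sum_distrib_right)
  also have "\<dots> = (\<Sum>x\<in>set_pmf p. measure_pmf.expectation (q x) f * pmf p x)"
  proof (intro sum.cong refl arg_cong2[where f="(*)"])
    fix x assume "x \<in> set_pmf p"
    then show "(\<Sum>y\<in>?Y. f y * pmf (q x) y) = measure_pmf.expectation (q x) f"
      by (intro integral_measure_pmf_real[symmetric]) (auto simp: finY)
  qed
  also have "\<dots> = measure_pmf.expectation p (\<lambda>x. measure_pmf.expectation (q x) f)"
    by (rule integral_measure_pmf_real[symmetric]) (auto simp: fp)
  finally show ?thesis .
qed

lemma exp_RAN_Suc:
  fixes f :: "ran_state \<Rightarrow> real"
  shows "measure_pmf.expectation (RAN (Suc t)) f =
    measure_pmf.expectation (RAN t) (\<lambda>s. measure_pmf.expectation (ran_step s) f)"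
  unfolding RAN.simps
  by (rule exp_bind) (use RAN_props[of t] in \<open>auto simp: set_step ran_inv_def\<close>)

lemma exp_cong_RAN:
  fixes f g :: "ran_state \<Rightarrow> real"
  assumes "\<And>s. ran_inv s \<Longrightarrow> f s = g s"
  shows "measure_pmf.expectation (RAN t) f = measure_pmf.expectation (RAN t) g"
  using RAN_props[of t] assms by (intro integral_cong_AE) (auto simp: AE_measure_pmf_iff)

lemma exp_mono_RAN:
  fixes f g :: "ran_state \<Rightarrow> real"
  assumes "\<And>s. ran_inv s \<Longrightarrow> f s \<le> g s"
  shows "measure_pmf.expectation (RAN t) f \<le> measure_pmf.expectation (RAN t) g"
  using RAN_props[of t] assms
  by (intro integral_mono_AE) (auto simp: AE_measure_pmf_iff integrable_measure_pmf_finite)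

lemma mean_H: "measure_pmf.expectation (RAN t) (H k m) = H k (m + t) ran_init"
proof (induction t arbitrary: m)
  case 0 then show ?case by (simp add: ran_init_def)
next
  case (Suc t)
  have "measure_pmf.expectation (RAN (Suc t)) (H k m) = measure_pmf.expectation (RAN t) (H k (Suc m))"
    unfolding exp_RAN_Suc by (rule exp_cong_RAN) (simp add: step_H)
  then show ?case using Suc[of "Suc m"] by simp
qed

lemma var_lemma:
  fixes x :: "'a \<Rightarrow> real"
  assumes "finite A" "A \<noteq> {}" "\<And>a. a \<in> A \<Longrightarrow> \<bar>x a - B\<bar> \<le> c"
  shows "(\<Sum>a\<in>A. (x a)\<^sup>2) / card A \<le> ((\<Sum>a\<in>A. x a) / card A)\<^sup>2 + c\<^sup>2"
proof -
  define N where "N = real (card A)"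
  define S where "S = (\<Sum>a\<in>A. x a)"
  define Q where "Q = (\<Sum>a\<in>A. (x a)\<^sup>2)"
  have Np: "N > 0" using assms unfolding N_def by (simp add: card_gt_0_iff)
  have "(\<Sum>a\<in>A. (x a - B)\<^sup>2) \<le> (\<Sum>a\<in>A. c\<^sup>2)"
  proof (intro sum_mono)
    fix a assume "a \<in> A"
    then have "\<bar>x a - B\<bar> \<le> c" by (rule assms(3))
    then show "(x a - B)\<^sup>2 \<le> c\<^sup>2"
      using abs_le_square_iff[of "x a - B" c] by (simp add: power2_abs)
  qed
  moreover have "(\<Sum>a\<in>A. (x a - B)\<^sup>2) = Q - 2 * B * S + N * B\<^sup>2"
  proof -
    have "(\<Sum>a\<in>A. (x a - B)\<^sup>2) = (\<Sum>a\<in>A. (x a)\<^sup>2 - 2 * B * x a + B\<^sup>2)"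
      by (intro sum.cong refl) (simp add: power2_eq_square algebra_simps)
    also have "\<dots> = Q - 2 * B * S + N * B\<^sup>2"
      unfolding Q_def S_def N_def by (simp add: sum.distrib sum_subtractf sum_distrib_left)
    finally show ?thesis .
  qed
  ultimately have h: "Q - 2 * B * S + N * B\<^sup>2 \<le> N * c\<^sup>2" unfolding N_def by simp
  have sq: "0 \<le> (S - N * B)\<^sup>2" by simp
  have "Q / N \<le> (S / N)\<^sup>2 + c\<^sup>2"
  proof -
    have hq: "Q \<le> N * c\<^sup>2 + 2 * B * S - N * B\<^sup>2" using h by linarith
    have "Q * N \<le> (N * c\<^sup>2 + 2 * B * S - N * B\<^sup>2) * N"
      using hq Np by (intro mult_right_mono) auto
    also have "\<dots> = S\<^sup>2 + c\<^sup>2 * N * N - (S - N * B)\<^sup>2"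
      by (simp add: power2_eq_square algebra_simps)
    also have "\<dots> \<le> S\<^sup>2 + c\<^sup>2 * N * N" using sq by linarith
    finally have "Q * N \<le> S\<^sup>2 + c\<^sup>2 * N * N" .
    then show ?thesis using Np by (simp add: field_simps power2_eq_square)
  qed
  then show ?thesis unfolding N_def S_def Q_def .
qed

lemma step_sq:
  assumes "ran_inv s"
  shows "measure_pmf.expectation (ran_step s) (\<lambda>s'. (H k m s')\<^sup>2) \<le> (H k (Suc m) s)\<^sup>2 + 9"
proof -
  have fin: "finite (faces s)" and ne: "faces s \<noteq> {}" using assms by (auto simp: ran_inv_def)
  have "(\<Sum>f\<in>faces s. (H k m (ran_insert s f))\<^sup>2) / card (faces s)
     \<le> ((\<Sum>f\<in>faces s. H k m (ran_insert s f)) / card (faces s))\<^sup>2 + 3\<^sup>2"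
    by (rule var_lemma[OF fin ne H_insert_close[OF assms]])
  then show ?thesis
    using step_H[OF assms, of k m] unfolding exp_step[OF assms] by simp
qed

lemma second_H: "measure_pmf.expectation (RAN t) (\<lambda>s. (H k m s)\<^sup>2) \<le> (H k (m + t) ran_init)\<^sup>2 + 9 * t"
proof (induction t arbitrary: m)
  case 0 then show ?case by (simp add: ran_init_def)
next
  case (Suc t)
  have "measure_pmf.expectation (RAN (Suc t)) (\<lambda>s. (H k m s)\<^sup>2)
     \<le> measure_pmf.expectation (RAN t) (\<lambda>s. (H k (Suc m) s)\<^sup>2 + 9)"
    unfolding exp_RAN_Suc by (rule exp_mono_RAN) (rule step_sq)
  also have "\<dots> = measure_pmf.expectation (RAN t) (\<lambda>s. (H k (Suc m) s)\<^sup>2) + 9"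
    using RAN_props[of t] by (simp add: integrable_measure_pmf_finite)
  also have "\<dots> \<le> (H k (m + Suc t) ran_init)\<^sup>2 + 9 * Suc t"
    using Suc[of "Suc m"] by simp
  finally show ?case .
qed

lemma cheb:
  assumes "a > 0"
  shows "measure_pmf.prob (RAN t)
            {s. \<bar>real (Z k s) - measure_pmf.expectation (RAN t) (\<lambda>s'. real (Z k s'))\<bar> \<ge> a}
         \<le> 9 * real t / a\<^sup>2"
proof -
  let ?f = "\<lambda>s. real (Z k s)"
  have fin: "finite (set_pmf (RAN t))" using RAN_props by blast
  have Hf: "H k 0 = ?f" using H0 by auto
  have mean: "measure_pmf.expectation (RAN t) ?f = H k t ran_init"
    using mean_H[of t k 0] Hf by simp
  have sec: "measure_pmf.expectation (RAN t) (\<lambda>s. (?f s)\<^sup>2) \<le> (H k t ran_init)\<^sup>2 + 9 * t"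
    using second_H[of t k 0] Hf by simp
  have "measure_pmf.prob (RAN t) {s \<in> space (measure_pmf (RAN t)).
      \<bar>?f s - measure_pmf.expectation (RAN t) ?f\<bar> \<ge> a}
      \<le> measure_pmf.variance (RAN t) ?f / a\<^sup>2"
    by (rule measure_pmf.Chebyshev_inequality) (auto simp: assms integrable_measure_pmf_finite[OF fin])
  also have "measure_pmf.variance (RAN t) ?f = measure_pmf.expectation (RAN t) (\<lambda>s. (?f s)\<^sup>2)
       - (measure_pmf.expectation (RAN t) ?f)\<^sup>2"
    by (rule measure_pmf.variance_eq) (auto simp: integrable_measure_pmf_finite[OF fin])
  also have "\<dots> \<le> 9 * real t" using sec mean by simp
  finally show ?thesis using assms by (simp add: divide_right_mono)
qed

theorem mainTheorem5:
  fixes k :: nat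
  assumes "k \<ge> 3"
  shows "(\<lambda>t. measure_pmf.prob (RAN t)
            {s. \<bar>real (Z k s) - measure_pmf.expectation (RAN t) (\<lambda>s'. real (Z k s'))\<bar>
                \<ge> sqrt (real t * ln (real t))}) \<longlonglongrightarrow> 0"
proof (rule tendsto_sandwich[where f="\<lambda>t. 0" and h="\<lambda>t. 9 / ln (real t)"])
  show "\<forall>\<^sub>F t in sequentially. 0 \<le> measure_pmf.prob (RAN t)
            {s. \<bar>real (Z k s) - measure_pmf.expectation (RAN t) (\<lambda>s'. real (Z k s'))\<bar>
                \<ge> sqrt (real t * ln (real t))}" by simp
  show "\<forall>\<^sub>F t in sequentially. measure_pmf.prob (RAN t)
            {s. \<bar>real (Z k s) - measure_pmf.expectation (RAN t) (\<lambda>s'. real (Z k s'))\<bar>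
                \<ge> sqrt (real t * ln (real t))} \<le> 9 / ln (real t)"
  proof (rule eventually_sequentiallyI[of 2])
    fix t :: nat assume t: "2 \<le> t"
    have lnp: "ln (real t) > 0" using t by simp
    have tp: "real t > 0" using t by simp
    have pos: "sqrt (real t * ln (real t)) > 0" using lnp tp by simp
    have "measure_pmf.prob (RAN t)
            {s. \<bar>real (Z k s) - measure_pmf.expectation (RAN t) (\<lambda>s'. real (Z k s'))\<bar>
                \<ge> sqrt (real t * ln (real t))} \<le> 9 * real t / (sqrt (real t * ln (real t)))\<^sup>2"
      by (rule cheb[OF pos])
    also have "\<dots> = 9 / ln (real t)" using lnp tp by simp
    finally show "measure_pmf.prob (RAN t)
            {s. \<bar>real (Z k s) - measure_pmf.expectation (RAN t) (\<lambda>s'. real (Z k s'))\<bar>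
                \<ge> sqrt (real t * ln (real t))} \<le> 9 / ln (real t)" .
  qed
  show "(\<lambda>t. 0) \<longlonglongrightarrow> 0" by simp
  show "(\<lambda>t. 9 / ln (real t)) \<longlonglongrightarrow> 0"
  proof (rule tendsto_divide_0)
    show "(\<lambda>t. 9::real) \<longlonglongrightarrow> 9" by simp
    have "filterlim (\<lambda>t. ln (real t)) at_top sequentially"
      by (rule filterlim_compose[OF ln_at_top filterlim_real_sequentially])
    then show "filterlim (\<lambda>t. ln (real t)) at_infinity sequentially"
      by (rule filterlim_at_top_imp_at_infinity)
  qed
qed


end
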